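(* For integers $\lambda_1\ge\lambda_2\ge0$: $F_{(\lambda_1)}(q)=[2]^{\lambda_1}$ and $F_{(\lambda_1,\lambda_2)}(q)=-q^{-1}[2]^{\lambda_1}+q^{-1}[2]^{\lambda_1-\lambda_2+1}[3]^{\lambda_2}$.
   Context: $[m]=1+q+\dots+q^{m-1}$. For a partition $\lambda=(\lambda_1\ge\dots\ge\lambda_k\ge0)$, the Young diagram $Y_\lambda$ has $\lambda_i$ left-justified boxes in row $i$ (row 1 on top). A $\hbox{Le}$-filling of $Y_\lambda$ is a map $D:Y_\lambda\to\{0,1\}$ such that no box filled with $0$ has a box filled with $1$ somewhere above it in the same column and a box filled with $1$ somewhere to its left in the same row. $F_\lambda(q)=\sum_D q^{\#\{\text{boxes with }D=1\}}$ over all $\hbox{Le}$-fillings of $Y_\lambda$. *)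

theory Defs
  imports Main
begin

definition qint :: "nat \<Rightarrow> 'a::comm_ring_1 \<Rightarrow> 'a" where
  "qint m q = (\<Sum>i<m. q ^ i)"

text \<open>Young diagram of a partition given as a list [lambda_1, ..., lambda_k]
  (weakly decreasing); boxes are (row, column), 0-indexed, row 0 on top.\<close>
definition young :: "nat list \<Rightarrow> (nat \<times> nat) set" where
  "young lam = {(i, j). i < length lam \<and> j < lam ! i}"

text \<open>A filling D : Y -> {0,1} is represented by the set S of boxes filled with 1.
  Le-condition: no box filled with 0 has a 1 above it in its column and a 1
  to its left in its row.\<close>
definition le_filling :: "nat list \<Rightarrow> (nat \<times> nat) set \<Rightarrow> bool" where
  "le_filling lam S \<longleftrightarrow> S \<subseteq> young lam \<and>
     (\<forall>i j. (i, j) \<in> young lam \<and> (i, j) \<notin> S \<longrightarrow>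
        \<not> ((\<exists>i'<i. (i', j) \<in> S) \<and> (\<exists>j'<j. (i, j') \<in> S)))"

definition F :: "nat list \<Rightarrow> 'a::comm_ring_1 \<Rightarrow> 'a" where
  "F lam q = (\<Sum>S\<in>{S. le_filling lam S}. q ^ card S)"

end

theory Submission
  imports Defs
begin

definition W :: "'a::comm_ring_1 \<Rightarrow> (nat \<times> nat) set set \<Rightarrow> 'a" where
  "W q X = (\<Sum>S\<in>X. q ^ card S)"

lemma young2: "young [a,b] = Pair 0 ` {..<a} \<union> Pair 1 ` {..<b}"
  unfolding young_def by (auto simp: less_Suc_eq nth_Cons split: nat.splits)

lemma young2c: "young [a,b] = {(i,j). (i=0 \<and> j<a) \<or> (i=1 \<and> j<b)}"
  unfolding young_def by (auto simp: less_Suc_eq nth_Cons split: nat.splits)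

lemma young1: "young [a] = {(i,j). i=0 \<and> j<a}"
  unfolding young_def by (auto simp: less_Suc_eq nth_Cons split: nat.splits)

lemma lf2: "le_filling [a,b] S \<longleftrightarrow> S \<subseteq> young [a,b] \<and>
   (\<forall>j<b. (1,j)\<notin>S \<and> (0,j)\<in>S \<longrightarrow> (\<forall>j'<j. (1,j')\<notin>S))"
proof
  assume H: "le_filling [a,b] S"
  show "S \<subseteq> young [a,b] \<and>
   (\<forall>j<b. (1,j)\<notin>S \<and> (0,j)\<in>S \<longrightarrow> (\<forall>j'<j. (1,j')\<notin>S))"
  proof (intro conjI allI impI)
    show "S \<subseteq> young [a,b]" using H unfolding le_filling_def by blast
  next
    fix j j' assume "j < b" "(1,j)\<notin>S \<and> (0,j)\<in>S" "j' < j"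
    moreover have "(1,j) \<in> young [a,b]" using \<open>j<b\<close> by (simp add: young2)
    ultimately show "(1,j')\<notin>S" using H unfolding le_filling_def
      by (metis less_one)
  qed
next
  assume H: "S \<subseteq> young [a,b] \<and>
   (\<forall>j<b. (1,j)\<notin>S \<and> (0,j)\<in>S \<longrightarrow> (\<forall>j'<j. (1,j')\<notin>S))"
  show "le_filling [a,b] S" unfolding le_filling_def
  proof (intro conjI allI impI)
    show "S \<subseteq> young [a,b]" using H by blast
  next
    fix i j assume A: "(i, j) \<in> young [a, b] \<and> (i, j) \<notin> S"
    show "\<not> ((\<exists>i'<i. (i', j) \<in> S) \<and> (\<exists>j'<j. (i, j') \<in> S))"
    proof
      assume B: "(\<exists>i'<i. (i', j) \<in> S) \<and> (\<exists>j'<j. (i, j') \<in> S)"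
      then have "i \<noteq> 0" by auto
      with A have i1: "i = 1" and jb: "j < b" by (auto simp: young2)
      from B i1 have "(0,j) \<in> S" by auto
      with H A i1 jb B show False by auto
    qed
  qed
qed

lemma lf1: "le_filling [a] S \<longleftrightarrow> S \<subseteq> {(i,j). i=0 \<and> j<a}"
  unfolding le_filling_def young1 by auto

lemma W_insert:
  assumes "finite X" "\<forall>S\<in>X. finite S \<and> x \<notin> S"
  shows "W q (insert x ` X) = q * W q X"
proof -
  have inj: "inj_on (insert x) X"
    using assms(2) by (auto simp: inj_on_def)
  have "W q (insert x ` X) = (\<Sum>S\<in>X. q ^ card (insert x S))"
    unfolding W_def by (simp add: sum.reindex[OF inj])
  also have "\<dots> = (\<Sum>S\<in>X. q * q ^ card S)"
    using assms(2) by (intro sum.cong) auto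
  finally show ?thesis by (simp add: W_def sum_distrib_left)
qed

lemma W_union:
  assumes "finite X" "finite Y" "X \<inter> Y = {}"
  shows "W q (X \<union> Y) = W q X + W q Y"
  unfolding W_def using assms by (simp add: sum.union_disjoint)

definition Fil2 where "Fil2 a b = {S. le_filling [a,b] S}"
definition Fil1 where "Fil1 a = {S. le_filling [a] S}"

lemma fin_Fil2: "finite (Fil2 a b)"
proof -
  have "Fil2 a b \<subseteq> Pow (young [a,b])" unfolding Fil2_def le_filling_def by auto
  moreover have "finite (young [a,b])" by (simp add: young2)
  ultimately show ?thesis by (meson finite_Pow_iff finite_subset)
qed

lemma fin_Fil1: "finite (Fil1 a)"
proof -
  have "Fil1 a \<subseteq> Pow (young [a])" unfolding Fil1_def lf1 young1 by auto
  moreover have "young [a] = Pair 0 ` {..<a}" unfolding young1 by auto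
  then have "finite (young [a])" by simp
  ultimately show ?thesis by (meson finite_Pow_iff finite_subset)
qed

lemma Fil2_fin: "S \<in> Fil2 a b \<Longrightarrow> finite S"
  unfolding Fil2_def lf2 young2 by (auto intro: finite_subset)

lemma Fil1_step: "Fil1 (Suc a) = Fil1 a \<union> insert (0,a) ` Fil1 a"
proof (intro equalityI subsetI)
  fix S assume "S \<in> Fil1 (Suc a)"
  then have S: "S \<subseteq> {(i,j). i=0 \<and> j<Suc a}" by (simp add: Fil1_def lf1)
  show "S \<in> Fil1 a \<union> insert (0,a) ` Fil1 a"
  proof (cases "(0,a) \<in> S")
    case True
    then have "S = insert (0,a) (S - {(0,a)})" by auto
    moreover have "S - {(0,a)} \<in> Fil1 a" using S by (auto simp: Fil1_def lf1 less_Suc_eq)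
    ultimately show ?thesis by blast
  next
    case False
    then have "S \<in> Fil1 a" using S by (auto simp: Fil1_def lf1 less_Suc_eq)
    then show ?thesis by blast
  qed
qed (auto simp: Fil1_def lf1)

lemma Fil2_step:
  assumes "b \<le> a"
  shows "Fil2 (Suc a) b = Fil2 a b \<union> insert (0,a) ` Fil2 a b"
proof (intro equalityI subsetI)
  fix S assume "S \<in> Fil2 (Suc a) b"
  then have S: "S \<subseteq> {(i,j). (i=0 \<and> j<Suc a) \<or> (i=1 \<and> j<b)}" and C: "\<forall>j<b. (1,j)\<notin>S \<and> (0,j)\<in>S \<longrightarrow> (\<forall>j'<j. (1,j')\<notin>S)"
    by (auto simp: Fil2_def lf2 young2c)
  show "S \<in> Fil2 a b \<union> insert (0,a) ` Fil2 a b"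
  proof (cases "(0,a) \<in> S")
    case True
    then have "S = insert (0,a) (S - {(0,a)})" by auto
    moreover have "S - {(0,a)} \<in> Fil2 a b" using S C assms
      unfolding Fil2_def lf2 young2c by (auto simp: less_Suc_eq)
    ultimately show ?thesis by blast
  next
    case False
    then have "S \<in> Fil2 a b" using S C unfolding Fil2_def lf2 young2c by (auto simp: less_Suc_eq)
    then show ?thesis by blast
  qed
next
  fix S assume "S \<in> Fil2 a b \<union> insert (0,a) ` Fil2 a b"
  then show "S \<in> Fil2 (Suc a) b" using assms
    unfolding Fil2_def lf2 young2c by (auto simp: less_Suc_eq)
qed

lemma Fil1_fin: "S \<in> Fil1 a \<Longrightarrow> finite S"
proof -
  assume "S \<in> Fil1 a"
  then have "S \<subseteq> young [a]" unfolding Fil1_def lf1 young1 by auto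
  moreover have "young [a] = Pair 0 ` {..<a}" unfolding young1 by auto
  ultimately show ?thesis by (metis finite_imageI finite_lessThan finite_subset)
qed

lemma W_Fil1: "W q (Fil1 a) = (1 + q) ^ a"
proof (induction a)
  case 0
  have "Fil1 0 = {{}}" unfolding Fil1_def lf1 by auto
  then show ?case by (simp add: W_def)
next
  case (Suc a)
  have d: "Fil1 a \<inter> insert (0,a) ` Fil1 a = {}" unfolding Fil1_def lf1 by auto
  have n: "\<forall>S\<in>Fil1 a. finite S \<and> (0,a) \<notin> S" using Fil1_fin unfolding Fil1_def lf1 by auto
  have "W q (Fil1 (Suc a)) = W q (Fil1 a) + q * W q (Fil1 a)"
    unfolding Fil1_step using d n fin_Fil1 by (simp add: W_union W_insert)
  then show ?case using Suc by (simp add: algebra_simps)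
qed

lemma W_Fil2_step: "b \<le> a \<Longrightarrow> W q (Fil2 (Suc a) b) = (1 + q) * W q (Fil2 a b)"
proof -
  assume ab: "b \<le> a"
  have d: "Fil2 a b \<inter> insert (0,a) ` Fil2 a b = {}" unfolding Fil2_def lf2 young2c by auto
  have n: "\<forall>S\<in>Fil2 a b. finite S \<and> (0,a) \<notin> S" using Fil2_fin unfolding Fil2_def lf2 young2c by auto
  have "W q (Fil2 (Suc a) b) = W q (Fil2 a b) + q * W q (Fil2 a b)"
    unfolding Fil2_step[OF ab] using d n fin_Fil2 by (simp add: W_union W_insert)
  then show ?thesis by (simp add: algebra_simps)
qed

lemma W_Fil2_d: "W q (Fil2 (b + d) b) = (1 + q) ^ d * W q (Fil2 b b)"
  by (induction d) (simp_all add: W_Fil2_step)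

lemma W_Fil2_0: "W q (Fil2 a 0) = (1 + q) ^ a"
proof -
  have "Fil2 0 0 = {{}}" unfolding Fil2_def lf2 young2c by auto
  then have "W q (Fil2 0 0) = 1" by (simp add: W_def)
  then show ?thesis using W_Fil2_d[of q 0 a] by simp
qed

lemma W_diag: "W q (Fil2 (Suc n) (Suc n)) = (1 + q + q^2) * W q (Fil2 n n) + q * (1 + q) ^ n"
proof -
  define X where "X = {S \<in> Fil2 (Suc n) n. \<not> ((0,n)\<in>S \<and> (\<exists>j'<n. (1,j')\<in>S))}"
  define Z where "Z = {T \<in> Fil2 n n. \<exists>j'<n. (1,j')\<in>T}"
  have e1: "Fil2 (Suc n) (Suc n) = X \<union> insert (1,n) ` Fil2 (Suc n) n"
  proof (intro equalityI subsetI)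
    fix S assume "S \<in> Fil2 (Suc n) (Suc n)"
    then have S: "S \<subseteq> {(i,j). (i=0 \<and> j<Suc n) \<or> (i=1 \<and> j<Suc n)}" and
      C: "\<forall>j<Suc n. (1,j)\<notin>S \<and> (0,j)\<in>S \<longrightarrow> (\<forall>j'<j. (1,j')\<notin>S)"
      by (auto simp: Fil2_def lf2 young2c)
    show "S \<in> X \<union> insert (1,n) ` Fil2 (Suc n) n"
    proof (cases "(1,n) \<in> S")
      case True
      then have "S = insert (1,n) (S - {(1,n)})" by auto
      moreover have "S - {(1,n)} \<in> Fil2 (Suc n) n"
        unfolding Fil2_def lf2 young2c
      proof (intro CollectI conjI allI impI)
        show "S - {(1,n)} \<subseteq> {(i,j). (i=0 \<and> j<Suc n) \<or> (i=1 \<and> j<n)}"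
          using S by (auto simp: less_Suc_eq)
      next
        fix j j' assume "j < n" "(1, j) \<notin> S - {(1, n)} \<and> (0, j) \<in> S - {(1, n)}" "j' < j"
        then show "(1, j') \<notin> S - {(1, n)}" using C[rule_format, of j j'] by auto
      qed
      ultimately show ?thesis by blast
    next
      case False
      then have "S \<in> X" using S C unfolding X_def Fil2_def lf2 young2c by (auto simp: less_Suc_eq)
      then show ?thesis by blast
    qed
  next
    fix S assume "S \<in> X \<union> insert (1,n) ` Fil2 (Suc n) n"
    then show "S \<in> Fil2 (Suc n) (Suc n)"
      unfolding X_def Fil2_def lf2 young2c by (auto simp: less_Suc_eq)
  qed
  have e2: "Fil2 (Suc n) n = X \<union> insert (0,n) ` Z"
  proof (intro equalityI subsetI)
    fix S assume "S \<in> Fil2 (Suc n) n"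
    then have S: "S \<subseteq> {(i,j). (i=0 \<and> j<Suc n) \<or> (i=1 \<and> j<n)}" and
      C: "\<forall>j<n. (1,j)\<notin>S \<and> (0,j)\<in>S \<longrightarrow> (\<forall>j'<j. (1,j')\<notin>S)"
      by (auto simp: Fil2_def lf2 young2c)
    show "S \<in> X \<union> insert (0,n) ` Z"
    proof (cases "(0,n) \<in> S \<and> (\<exists>j'<n. (1,j')\<in>S)")
      case True
      then have "S = insert (0,n) (S - {(0,n)})" by auto
      moreover have "S - {(0,n)} \<in> Z" using S C True
        unfolding Z_def Fil2_def lf2 young2c by (auto simp: less_Suc_eq)
      ultimately show ?thesis by blast
    next
      case False
      then have "S \<in> X" using \<open>S \<in> Fil2 (Suc n) n\<close> unfolding X_def by auto
      then show ?thesis by blast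
    qed
  next
    fix S assume "S \<in> X \<union> insert (0,n) ` Z"
    then show "S \<in> Fil2 (Suc n) n"
      unfolding X_def Z_def Fil2_def lf2 young2c by (auto simp: less_Suc_eq)
  qed
  have e3: "Fil2 n n = Z \<union> Fil2 n 0"
    unfolding Z_def Fil2_def lf2 young2c by auto
  have finX: "finite X" unfolding X_def using fin_Fil2 by simp
  have finZ: "finite Z" unfolding Z_def using fin_Fil2 by simp
  have d1: "X \<inter> insert (1,n) ` Fil2 (Suc n) n = {}"
    unfolding X_def Fil2_def lf2 young2c by auto
  have d2: "X \<inter> insert (0,n) ` Z = {}"
    unfolding X_def Z_def by auto
  have d3: "Z \<inter> Fil2 n 0 = {}"
    unfolding Z_def Fil2_def lf2 young2c by auto
  have n1: "\<forall>S\<in>Fil2 (Suc n) n. finite S \<and> (1,n) \<notin> S"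
    using Fil2_fin unfolding Fil2_def lf2 young2c by auto
  have n2: "\<forall>S\<in>Z. finite S \<and> (0,n) \<notin> S"
    using Fil2_fin unfolding Z_def Fil2_def lf2 young2c by auto
  have w1: "W q (Fil2 (Suc n) (Suc n)) = W q X + q * W q (Fil2 (Suc n) n)"
    unfolding e1 using finX fin_Fil2 d1 n1 by (simp add: W_union W_insert)
  have w2: "W q (Fil2 (Suc n) n) = W q X + q * W q Z"
    unfolding e2 using finX finZ d2 n2 by (simp add: W_union W_insert)
  have w3: "W q (Fil2 n n) = W q Z + (1 + q) ^ n"
    unfolding e3 using finZ fin_Fil2 d3 by (simp add: W_union W_Fil2_0)
  have w4: "W q (Fil2 (Suc n) n) = (1 + q) * W q (Fil2 n n)"
    by (simp add: W_Fil2_step)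
  have x: "W q X = W q Z + (1+q)*(1+q)^n" using w2 w3 w4 by (simp add: algebra_simps)
  have y: "W q (Fil2 (Suc n) (Suc n)) = (W q Z + (1+q)*(1+q)^n) + q*((1+q)*(W q Z + (1+q)^n))"
    using w1 w3 w4 x by simp
  show ?thesis unfolding y w3 by (simp add: algebra_simps power2_eq_square)
qed

lemma W_diag_closed:
  fixes q :: "'a::comm_ring_1"
  shows "q * W q (Fil2 n n) = (1+q)*(1+q+q^2)^n - (1+q)^n"
proof (induction n)
  case 0
  have "Fil2 0 0 = {{}}" unfolding Fil2_def lf2 young2c by auto
  then show ?case by (simp add: W_def)
next
  case (Suc n)
  have "q * W q (Fil2 (Suc n) (Suc n)) = (1 + q + q^2) * (q * W q (Fil2 n n)) + q * q * (1 + q) ^ n"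
    by (simp add: W_diag algebra_simps)
  also have "\<dots> = (1+q)*(1+q+q^2)^Suc n - (1+q)^Suc n"
    unfolding Suc by (simp add: algebra_simps power2_eq_square)
  finally show ?case .
qed

lemma qint2: "qint 2 q = 1 + q" by (simp add: qint_def eval_nat_numeral lessThan_Suc)
lemma qint3: "qint 3 q = 1 + q + q^2" by (simp add: qint_def eval_nat_numeral lessThan_Suc algebra_simps)

theorem mainTheorem3:
  fixes l1 l2 :: nat and q :: "'a::field"
  assumes "l1 \<ge> l2" and "q \<noteq> 0"
  shows "F [l1] q = (qint 2 q) ^ l1 \<and>
         F [l1, l2] q = - inverse q * (qint 2 q) ^ l1
            + inverse q * (qint 2 q) ^ (l1 - l2 + 1) * (qint 3 q) ^ l2"
proof
  show "F [l1] q = (qint 2 q) ^ l1"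
    using W_Fil1[of q l1] by (simp add: F_def W_def Fil1_def qint2)
next
  define d where "d = l1 - l2"
  have l1: "l1 = l2 + d" using assms(1) d_def by simp
  have "F [l1, l2] q = W q (Fil2 l1 l2)" by (simp add: F_def W_def Fil2_def)
  also have "\<dots> = (1 + q) ^ d * W q (Fil2 l2 l2)" unfolding l1 by (rule W_Fil2_d)
  also have "\<dots> = inverse q * ((1 + q) ^ d * (q * W q (Fil2 l2 l2)))"
    using assms(2) by (simp add: field_simps)
  also have "\<dots> = inverse q * ((1 + q) ^ d * ((1+q)*(1+q+q^2)^l2 - (1+q)^l2))"
    by (simp only: W_diag_closed)
  also have "\<dots> = - inverse q * (qint 2 q) ^ l1
            + inverse q * (qint 2 q) ^ (l1 - l2 + 1) * (qint 3 q) ^ l2"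
    unfolding qint2 qint3 d_def[symmetric] l1 by (simp add: algebra_simps power_add)
  finally show "F [l1, l2] q = - inverse q * (qint 2 q) ^ l1
            + inverse q * (qint 2 q) ^ (l1 - l2 + 1) * (qint 3 q) ^ l2" .
qed

end
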